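(* Let $G_1,G_2,H_1,H_2\in SL^+_{sym}(2)$ and let $g_i,h_i$ be the largest eigenvalues of $G_i,H_i$ ($i=1,2$). Then $$K^{min}\le\hat K:=\sqrt{g_1h_1g_2h_2}\le K:=\max\{g_1h_1,g_2h_2\}.$$ In particular $K^{min}<K$ whenever $g_1h_1\ne g_2h_2$.
   Context: $SL^+_{sym}(2)$: real symmetric positive definite $2\times2$ matrices with determinant $1$; $SL(2)$: real $2\times2$ matrices of determinant $1$; $\lambda_{\max}(M)$: largest eigenvalue of a symmetric $M$. For $G_1,G_2,H_1,H_2\in SL^+_{sym}(2)$ (the two phases of the two-phase fields $G=\chi_{E_1}G_1+\chi_{E_2}G_2$, $H=\chi_{E_1}H_1+\chi_{E_2}H_2$ with $E_1,E_2$ a measurable partition of $\Omega$ into sets of positive measure), define $$K^{min}:=\min_{A,B\in SL(2)}\ \max_{i=1,2}\ \lambda_{\max}(B^TG_iB)\,\lambda_{\max}(A^TH_iA).$$ *)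

theory Defs
  imports "HOL-Analysis.Analysis"
begin

definition SL2 :: "(real^2^2) set" where
  "SL2 = {A. det A = 1}"

definition SL2_sym_pos :: "(real^2^2) set" where
  "SL2_sym_pos = {M. transpose M = M \<and> (\<forall>v. v \<noteq> 0 \<longrightarrow> v \<bullet> (M *v v) > 0) \<and> det M = 1}"

definition eigenvalues :: "real^'n^'n \<Rightarrow> real set" where
  "eigenvalues M = {l. \<exists>v. v \<noteq> 0 \<and> M *v v = l *\<^sub>R v}"

definition lambda_max :: "real^'n^'n \<Rightarrow> real" where
  "lambda_max M = Max (eigenvalues M)"

definition Kmin :: "real^2^2 \<Rightarrow> real^2^2 \<Rightarrow> real^2^2 \<Rightarrow> real^2^2 \<Rightarrow> real" where
  "Kmin G1 G2 H1 H2 = (INF AB \<in> SL2 \<times> SL2.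
     (let A = fst AB; B = snd AB in
      max (lambda_max (transpose B ** G1 ** B) * lambda_max (transpose A ** H1 ** A))
          (lambda_max (transpose B ** G2 ** B) * lambda_max (transpose A ** H2 ** A))))"

end

theory Submission
  imports Defs
begin

lemma sym21: assumes "transpose M = M" shows "M$2$1 = M$1$2"
proof -
  have "(transpose M)$1$2 = M$1$2" using assms by simp
  thus ?thesis by (simp add: transpose_def)
qed

lemma mv2: "(M *v v) $ 1 = M$1$1 * v$1 + M$1$2 * v$2" "(M *v v) $ 2 = M$2$1 * v$1 + M$2$2 * v$2"
  for M :: "real^2^2"
  by (simp_all add: matrix_vector_mult_def sum_2)

lemma vec2_eq: "(v::real^2) = w \<longleftrightarrow> v$1 = w$1 \<and> v$2 = w$2"
  by (simp add: vec_eq_iff forall_2)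

lemma eig_iff:
  fixes M :: "real^2^2"
  assumes "transpose M = M"
  shows "l \<in> eigenvalues M \<longleftrightarrow> (M$1$1 - l)*(M$2$2 - l) = (M$1$2)^2"
proof -
  define a where "a = M$1$1"
  define b where "b = M$1$2"
  define d where "d = M$2$2"
  have s: "M$2$1 = b" using sym21[OF assms] b_def by simp
  show ?thesis
  proof
    assume "l \<in> eigenvalues M"
    then obtain v where v: "v \<noteq> 0" "M *v v = l *\<^sub>R v" by (auto simp: eigenvalues_def)
    have e1: "a * v$1 + b * v$2 = l * v$1" and e2: "b * v$1 + d * v$2 = l * v$2"
      using v(2) by (auto simp: vec2_eq mv2 s a_def b_def d_def)
    have nz: "v$1 \<noteq> 0 \<or> v$2 \<noteq> 0" using v(1) by (auto simp: vec2_eq)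
    have "(a - l) * (d - l) = b^2"
    proof (cases "v$1 = 0")
      case True
      then have "v$2 \<noteq> 0" using nz by simp
      then show ?thesis using e1 e2 True by (simp add: power2_eq_square)
    next
      case False
      show ?thesis
      proof (cases "v$2 = 0")
        case True
        then show ?thesis using e1 e2 False by (simp add: power2_eq_square)
      next
        case F2: False
        have "(a - l) * v$1 = - b * v$2" "(d - l) * v$2 = - b * v$1" using e1 e2 by algebra+
        then have "((a - l) * (d - l)) * (v$1 * v$2) = b^2 * (v$1 * v$2)"
          by (metis (no_types, opaque_lifting) mult.assoc mult.commute mult_minus_left minus_mult_minus power2_eq_square)
        then show ?thesis using False F2 by simp
      qed
    qed
    thus "(M$1$1 - l)*(M$2$2 - l) = (M$1$2)^2" by (simp add: a_def b_def d_def)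
  next
    assume h: "(M$1$1 - l)*(M$2$2 - l) = (M$1$2)^2"
    then have h': "(a - l) * (d - l) = b^2" by (simp add: a_def b_def d_def)
    show "l \<in> eigenvalues M"
    proof (cases "b = 0")
      case False
      let ?v = "vector [b, l - a] :: real^2"
      have "?v \<noteq> 0" using False by (auto simp: vec2_eq)
      moreover have "M *v ?v = l *\<^sub>R ?v"
        using h' False by (simp add: vec2_eq mv2 s a_def[symmetric] b_def[symmetric] d_def[symmetric]) (simp add: algebra_simps power2_eq_square)
      ultimately show ?thesis by (auto simp: eigenvalues_def)
    next
      case True
      then have "l = a \<or> l = d" using h' by auto
      then show ?thesis
      proof
        assume "l = a"
        let ?v = "vector [1, 0] :: real^2"
        have "?v \<noteq> 0" by (auto simp: vec2_eq)
        moreover have "M *v ?v = l *\<^sub>R ?v"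
          using True \<open>l = a\<close> by (simp add: vec2_eq mv2 s a_def[symmetric] b_def[symmetric] d_def[symmetric])
        ultimately show ?thesis by (auto simp: eigenvalues_def)
      next
        assume "l = d"
        let ?v = "vector [0, 1] :: real^2"
        have "?v \<noteq> 0" by (auto simp: vec2_eq)
        moreover have "M *v ?v = l *\<^sub>R ?v"
          using True \<open>l = d\<close> by (simp add: vec2_eq mv2 s a_def[symmetric] b_def[symmetric] d_def[symmetric])
        ultimately show ?thesis by (auto simp: eigenvalues_def)
      qed
    qed
  qed
qed


definition lm :: "real^2^2 \<Rightarrow> real" where
  "lm M = (M$1$1 + M$2$2 + sqrt((M$1$1 - M$2$2)^2 + 4*(M$1$2)^2))/2"
definition lm2 :: "real^2^2 \<Rightarrow> real" where
  "lm2 M = (M$1$1 + M$2$2 - sqrt((M$1$1 - M$2$2)^2 + 4*(M$1$2)^2))/2"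

lemma quad_roots:
  fixes a b d l :: real
  shows "(a - l)*(d - l) = b^2 \<longleftrightarrow> l = (a + d + sqrt((a - d)^2 + 4*b^2))/2 \<or> l = (a + d - sqrt((a - d)^2 + 4*b^2))/2"
proof -
  define s where "s = sqrt((a - d)^2 + 4*b^2)"
  have s2: "s^2 = (a - d)^2 + 4*b^2" unfolding s_def by simp
  have "(a - l)*(d - l) - b^2 = (l - (a + d + s)/2) * (l - (a + d - s)/2)"
    using s2 by (simp add: algebra_simps power2_eq_square) (simp add: field_simps)
  then have "(a - l)*(d - l) = b^2 \<longleftrightarrow> (l - (a + d + s)/2) * (l - (a + d - s)/2) = 0" by linarith
  then show ?thesis unfolding s_def[symmetric] by simp
qed

lemma eigs: fixes M :: "real^2^2" assumes "transpose M = M" shows "eigenvalues M = {lm M, lm2 M}"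
  using eig_iff[OF assms] quad_roots unfolding lm_def lm2_def by blast

lemma lmax_eq: fixes M :: "real^2^2" assumes "transpose M = M" shows "lambda_max M = lm M"
proof -
  have "lm2 M \<le> lm M" unfolding lm_def lm2_def by simp
  then show ?thesis unfolding lambda_max_def eigs[OF assms] by (simp add: max_def)
qed

lemma inner_mv: "v \<bullet> ((M::real^2^2) *v v) = M$1$1 * (v$1)^2 + (M$1$2 + M$2$1) * (v$1 * v$2) + M$2$2 * (v$2)^2"
  by (simp add: inner_vec_def sum_2 mv2 algebra_simps power2_eq_square)

lemma inner_vv: "v \<bullet> (v::real^2) = (v$1)^2 + (v$2)^2"
  by (simp add: inner_vec_def sum_2 power2_eq_square)

lemma rayleigh:
  fixes M :: "real^2^2"
  assumes "transpose M = M"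
  shows "v \<bullet> (M *v v) \<le> lambda_max M * (v \<bullet> v)"
proof -
  define a where "a = M$1$1"
  define b where "b = M$1$2"
  define d where "d = M$2$2"
  define s where "s = sqrt((a - d)^2 + 4*b^2)"
  define L where "L = lambda_max M"
  have L: "L = (a + d + s)/2" unfolding L_def lmax_eq[OF assms] lm_def a_def b_def d_def s_def by simp
  have s21: "M$2$1 = b" using sym21[OF assms] b_def by simp
  have sge: "\<bar>a - d\<bar> \<le> s" unfolding s_def
    by (rule real_le_rsqrt) (simp add: power2_eq_square)
  have p1: "L - a \<ge> 0" "L - d \<ge> 0" using sge L by auto
  have prod0: "(a - L)*(d - L) = b^2" using quad_roots[of a L d b] L unfolding s_def by blast
  have prod: "(L - a)*(L - d) = b^2" using prod0 by (metis minus_diff_eq minus_mult_minus)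
  define x where "x = v$1"
  define y where "y = v$2"
  have Q: "(L - a)*x^2 - 2*b*(x*y) + (L - d)*y^2 \<ge> 0"
  proof (cases "L - a = 0")
    case True
    then have "b = 0" using prod by simp
    then show ?thesis using True p1 by simp
  next
    case False
    then have pos: "L - a > 0" using p1 by simp
    have "(L - a) * ((L - a)*x^2 - 2*b*(x*y) + (L - d)*y^2) = ((L - a)*x - b*y)^2"
      using prod by algebra
    then have "(L - a) * ((L - a)*x^2 - 2*b*(x*y) + (L - d)*y^2) \<ge> 0" by simp
    then show ?thesis using pos by (simp add: zero_le_mult_iff)
  qed
  show ?thesis unfolding inner_mv inner_vv L_def[symmetric]
    using Q by (simp add: s21 a_def[symmetric] b_def[symmetric] d_def[symmetric] x_def[symmetric] y_def[symmetric] algebra_simps)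
qed

lemma rayleigh_le:
  fixes M :: "real^2^2"
  assumes "transpose M = M" "\<And>v. v \<bullet> (M *v v) \<le> L * (v \<bullet> v)"
  shows "lambda_max M \<le> L"
proof -
  have "lm M \<in> eigenvalues M" using eigs[OF assms(1)] by simp
  then obtain v where v: "v \<noteq> 0" "M *v v = lm M *\<^sub>R v" by (auto simp: eigenvalues_def)
  have "lm M * (v \<bullet> v) \<le> L * (v \<bullet> v)" using assms(2)[of v] v(2) by simp
  moreover have "v \<bullet> v > 0" using v(1) by simp
  ultimately show ?thesis using lmax_eq[OF assms(1)] by simp
qed


lemma det2s: "transpose (M::real^2^2) = M \<Longrightarrow> det M = M$1$1 * M$2$2 - (M$1$2)^2"
  using sym21[of M] by (simp add: det_2 power2_eq_square)

lemma lmax_det1: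
  fixes M :: "real^2^2"
  assumes s: "transpose M = M" and d: "det M = 1" and t: "M$1$1 + M$2$2 = y + 1/y" and y: "y \<ge> 1"
  shows "lambda_max M = y"
proof -
  define a where "a = M$1$1"
  define b where "b = M$1$2"
  define d where "d = M$2$2"
  have dd: "a*d - b^2 = 1" using det2s[OF s] d a_def b_def d_def by simp
  have tt: "a + d = y + 1/y" using t a_def d_def by simp
  have "(a - d)^2 + 4*b^2 = (a+d)^2 - 4*(a*d - b^2)" by (simp add: algebra_simps power2_eq_square)
  also have "\<dots> = (y + 1/y)^2 - 4" using dd tt by simp
  also have "\<dots> = (y - 1/y)^2" using y by (simp add: power2_eq_square field_simps)
  moreover have "1/y \<le> y" using y by (smt (verit) divide_le_eq_1)
  ultimately have D: "sqrt ((a - d)^2 + 4*b^2) = y - 1/y"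
    by simp
  show ?thesis unfolding lmax_eq[OF s] lm_def a_def[symmetric] b_def[symmetric] d_def[symmetric] D tt
    by simp
qed

lemma quadform: "v \<bullet> ((transpose B ** M ** B) *v v) = (B *v v) \<bullet> (M *v (B *v (v::real^2)))"
  for B M :: "real^2^2"
proof -
  have "(transpose B ** M ** B) *v v = transpose B *v (M *v (B *v v))"
    by (simp add: matrix_vector_mul_assoc matrix_mul_assoc)
  moreover have "(B *v v) \<bullet> w = v \<bullet> (transpose B *v w)" for w
    using dot_lmul_matrix[of v "transpose B" w] by (simp only: vector_transpose_matrix)
  ultimately show ?thesis by simp
qed

lemma sym_congr: "transpose M = M \<Longrightarrow> transpose (transpose B ** M ** B) = transpose B ** M ** (B::real^2^2)"
  by (simp add: matrix_transpose_mul matrix_mul_assoc)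

lemma psd_nonneg:
  fixes M :: "real^2^2"
  assumes "transpose M = M" "\<And>v. 0 \<le> v \<bullet> (M *v v)"
  shows "lambda_max M \<ge> 0"
proof -
  have "lm M \<in> eigenvalues M" using eigs[OF assms(1)] by simp
  then obtain v where v: "v \<noteq> 0" "M *v v = lm M *\<^sub>R v" by (auto simp: eigenvalues_def)
  have "0 \<le> lm M * (v \<bullet> v)" using assms(2)[of v] v(2) by simp
  moreover have "v \<bullet> v > 0" using v(1) by simp
  ultimately show ?thesis using lmax_eq[OF assms(1)] by (simp add: zero_le_mult_iff)
qed

lemma spd_facts:
  fixes G :: "real^2^2"
  assumes "G \<in> SL2_sym_pos"
  shows "lambda_max G \<ge> 1" "G$1$1 + G$2$2 = lambda_max G + 1 / lambda_max G"
    "G$1$1 * G$2$2 - (G$1$2)^2 = 1" "transpose G = G" "\<And>v. 0 \<le> v \<bullet> (G *v v)"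
proof -
  have s: "transpose G = G" and pd: "\<And>v. v \<noteq> 0 \<Longrightarrow> v \<bullet> (G *v v) > 0" and dt: "det G = 1"
    using assms by (auto simp: SL2_sym_pos_def)
  show "transpose G = G" by fact
  show "\<And>v. 0 \<le> v \<bullet> (G *v v)"
    by (metis pd eq_iff inner_zero_left matrix_vector_mult_0_right less_imp_le)
  define a where "a = G$1$1"
  define b where "b = G$1$2"
  define d where "d = G$2$2"
  have dd: "a*d - b^2 = 1" using det2s[OF s] dt a_def b_def d_def by simp
  then show "G$1$1 * G$2$2 - (G$1$2)^2 = 1" using a_def b_def d_def by simp
  define sq where "sq = sqrt ((a - d)^2 + 4*b^2)"
  have sq2: "sq^2 = (a - d)^2 + 4*b^2" unfolding sq_def by simp
  have l1: "lambda_max G = (a + d + sq)/2" unfolding lmax_eq[OF s] lm_def sq_def a_def b_def d_def by simp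
  have "lm2 G \<in> eigenvalues G" using eigs[OF s] by simp
  then obtain v where v: "v \<noteq> 0" "G *v v = lm2 G *\<^sub>R v" by (auto simp: eigenvalues_def)
  have "0 < lm2 G * (v \<bullet> v)" using pd[OF v(1)] v(2) by simp
  moreover have "v \<bullet> v > 0" using v(1) by simp
  ultimately have l2p: "lm2 G > 0" by (simp add: zero_less_mult_iff)
  have l2: "lm2 G = (a + d - sq)/2" unfolding lm2_def sq_def a_def b_def d_def by simp
  have prod: "lambda_max G * lm2 G = 1" unfolding l1 l2 using dd sq2
    by (simp add: field_simps power2_eq_square)
  have ge: "lambda_max G \<ge> lm2 G" unfolding l1 l2 sq_def by simp
  have pos: "lambda_max G > 0" using ge l2p by simp
  show "lambda_max G \<ge> 1"
  proof (rule ccontr)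
    assume "\<not> 1 \<le> lambda_max G"
    then have "lambda_max G < 1" by simp
    then have "lambda_max G * lm2 G < 1 * 1" using ge l2p pos
      using mult_strict_mono[of "lambda_max G" 1 "lm2 G" 1] by simp
    then show False using prod by simp
  qed
  have "lm2 G = 1 / lambda_max G" using prod pos by (simp add: field_simps)
  moreover have "lambda_max G + lm2 G = a + d" unfolding l1 l2 by (simp add: field_simps)
  ultimately show "G$1$1 + G$2$2 = lambda_max G + 1 / lambda_max G" using a_def d_def by simp
qed


definition mk2 :: "real \<Rightarrow> real \<Rightarrow> real \<Rightarrow> real \<Rightarrow> real^2^2" where
  "mk2 p q r t = vector [vector [p, q], vector [r, t]]"

lemma mk2_nth [simp]: "mk2 p q r t $ 1 $ 1 = p" "mk2 p q r t $ 1 $ 2 = q" "mk2 p q r t $ 2 $ 1 = r" "mk2 p q r t $ 2 $ 2 = t"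
  by (simp_all add: mk2_def)

lemma mm2 [simp]: "((A::real^2^2) ** B) $ i $ j = A$i$1 * B$1$j + A$i$2 * B$2$j"
  by (simp add: matrix_matrix_mult_def sum_2)

lemma tr_nth [simp]: "transpose (A::real^2^2) $ i $ j = A $ j $ i"
  by (simp add: transpose_def)

lemma det_alg:
  fixes a b d g c mu nu al be :: real
  assumes "a + d = g + c" "a*d - b^2 = 1" "g*c = 1" "mu*nu = 1" "al + be*g = mu" "al + be*c = nu"
  shows "(al + be*a)*(al + be*d) - (be*b)*(be*b) = 1"
  using assms by algebra

lemma trace2_alg:
  fixes a b d g c mu nu al be :: real
  assumes "a + d = g + c" "a*d - b^2 = 1" "g*c = 1" "mu*nu = 1" "al + be*g = mu" "al + be*c = nu"
  shows "(al+be*a)*(al+be*a) + (be*b)*(be*b) + ((be*b)*(be*b) + (al+be*d)*(al+be*d)) = mu^2 + nu^2"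
  using assms by algebra

lemma trace_alg:
  fixes a b d g c mu nu al be :: real
  assumes "a + d = g + c" "a*d - b^2 = 1" "g*c = 1" "mu*nu = 1" "al + be*g = mu" "al + be*c = nu"
  shows "(al+be*a)*(a*(al+be*a) + b*(be*b)) + (be*b)*(b*(al+be*a) + d*(be*b))
       + ((be*b)*(a*(be*b) + b*(al+be*d)) + (al+be*d)*(b*(be*b) + d*(al+be*d))) = g*mu^2 + c*nu^2"
  using assms by algebra


lemma scale:
  fixes G :: "real^2^2"
  assumes G: "G \<in> SL2_sym_pos" and x1: "1 / lambda_max G \<le> x" and x2: "x \<le> 1"
  shows "\<exists>B. det B = 1 \<and> lambda_max (transpose B ** G ** B) \<le> lambda_max G * x
     \<and> (\<forall>M. transpose M = M \<longrightarrow> (\<forall>v. 0 \<le> v \<bullet> (M *v v)) \<longrightarrow> lambda_max (transpose B ** M ** B) \<le> lambda_max M / x)"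
proof -
  note F = spd_facts[OF G]
  define g where "g = lambda_max G"
  have g1: "g \<ge> 1" using F g_def by simp
  have "1 / lambda_max G > 0" using g1 g_def by simp
  then have xpos: "x > 0" using x1 by linarith
  show ?thesis
  proof (cases "g = 1")
    case True
    then have x: "x = 1" using x1 x2 g_def by simp
    show ?thesis
      by (rule exI[of _ "mat 1"]) (simp add: x det_I matrix_mul_lid matrix_mul_rid transpose_mat)
  next
    case False
    then have gg: "g > 1" using g1 by simp
    define c where "c = 1 / g"
    have gc: "g * c = 1" using gg c_def by simp
    have "c < 1" using gg c_def by simp
    then have gcne: "g - c \<noteq> 0" using gg by linarith
    define mu where "mu = sqrt x"
    define nu where "nu = 1 / mu"
    have mupos: "mu > 0" using xpos mu_def by simp
    have munu: "mu * nu = 1" using mupos nu_def by simp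
    have mu2: "mu^2 = x" using xpos mu_def by simp
    define be where "be = (mu - nu) / (g - c)"
    define al where "al = mu - be * g"
    have h1: "al + be * g = mu" using al_def by simp
    have "be * (g - c) = mu - nu" unfolding be_def using gcne by simp
    then have "be * g - be * c = mu - nu" by (simp add: right_diff_distrib)
    then have h2: "al + be * c = nu" unfolding al_def by linarith
    define a where "a = G$1$1"
    define b where "b = G$1$2"
    define d where "d = G$2$2"
    have s21: "G$2$1 = b" using sym21[OF F(4)] b_def by simp
    have tr: "a + d = g + c" using F(2) a_def d_def g_def c_def by simp
    have dt: "a*d - b^2 = 1" using F(3) a_def b_def d_def by simp
    have Gm: "G = mk2 a b b d" using s21 by (simp add: vec_eq_iff forall_2 a_def b_def d_def)
    define B where "B = mk2 (al + be*a) (be*b) (be*b) (al + be*d)"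
    have Bs: "transpose B = B" by (simp add: vec_eq_iff forall_2 B_def)
    have Bd: "det B = 1" unfolding B_def det_2 using det_alg[OF tr dt gc munu h1 h2] by simp
    define T1 where "T1 = transpose B ** G ** B"
    define T2 where "T2 = transpose B ** B"
    have T1s: "transpose T1 = T1" unfolding T1_def by (rule sym_congr[OF F(4)])
    have T2s: "transpose T2 = T2" unfolding T2_def by (simp add: matrix_transpose_mul)
    have T1d: "det T1 = 1" unfolding T1_def using Bd G by (simp add: det_mul det_transpose SL2_sym_pos_def)
    have T2d: "det T2 = 1" unfolding T2_def using Bd by (simp add: det_mul det_transpose)
    have "T1$1$1 + T1$2$2 = (al+be*a)*(a*(al+be*a) + b*(be*b)) + (be*b)*(b*(al+be*a) + d*(be*b))
       + ((be*b)*(a*(be*b) + b*(al+be*d)) + (al+be*d)*(b*(be*b) + d*(al+be*d)))"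
      unfolding T1_def B_def Gm by (simp; algebra)
    then have T1t: "T1$1$1 + T1$2$2 = g*mu^2 + c*nu^2" using trace_alg[OF tr dt gc munu h1 h2] by simp
    have "T2$1$1 + T2$2$2 = (al+be*a)*(al+be*a) + (be*b)*(be*b) + ((be*b)*(be*b) + (al+be*d)*(al+be*d))"
      unfolding T2_def B_def by simp
    then have T2t: "T2$1$1 + T2$2$2 = mu^2 + nu^2" using trace2_alg[OF tr dt gc munu h1 h2] by simp
    have nu2: "nu^2 = 1/x" unfolding nu_def using mu2 by (simp add: power_divide)
    have gx: "g * x \<ge> 1" using x1 g_def gg by (simp add: field_simps)
    have L1: "lambda_max T1 = g * x"
      by (rule lmax_det1[OF T1s T1d _ gx]) (use T1t mu2 nu2 c_def in simp)
    have L2: "lambda_max T2 = 1 / x"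
      by (rule lmax_det1[OF T2s T2d _]) (use T2t mu2 nu2 xpos x2 in simp_all)
    have BB: "(B *v v) \<bullet> (B *v v) \<le> (1/x) * (v \<bullet> v)" for v
    proof -
      have "(B *v v) \<bullet> (B *v v) = v \<bullet> (transpose B *v (B *v v))"
        using dot_lmul_matrix[of v "transpose B" "B *v v"] by (simp only: vector_transpose_matrix)
      also have "\<dots> = v \<bullet> (T2 *v v)" by (simp add: T2_def matrix_vector_mul_assoc)
      also have "\<dots> \<le> (1/x) * (v \<bullet> v)" using rayleigh[OF T2s, of v] L2 by simp
      finally show ?thesis .
    qed
    have main: "lambda_max (transpose B ** M ** B) \<le> lambda_max M / x"
      if sM: "transpose M = M" and pM: "\<forall>v. 0 \<le> v \<bullet> (M *v v)" for M
    proof (rule rayleigh_le[OF sym_congr[OF sM]])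
      fix v :: "real^2"
      have l0: "lambda_max M \<ge> 0" using psd_nonneg[OF sM] pM by blast
      have "v \<bullet> ((transpose B ** M ** B) *v v) = (B *v v) \<bullet> (M *v (B *v v))" by (rule quadform)
      also have "\<dots> \<le> lambda_max M * ((B *v v) \<bullet> (B *v v))" by (rule rayleigh[OF sM])
      also have "\<dots> \<le> lambda_max M * ((1/x) * (v \<bullet> v))" by (rule mult_left_mono[OF BB l0])
      finally show "v \<bullet> ((transpose B ** M ** B) *v v) \<le> lambda_max M / x * (v \<bullet> v)" by simp
    qed
    show ?thesis
      using Bd L1 main unfolding T1_def g_def by (intro exI[of _ B]) auto
  qed
qed


lemma nonneg_congr:
  fixes M B :: "real^2^2"
  assumes "transpose M = M" "\<And>v. 0 \<le> v \<bullet> (M *v v)"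
  shows "0 \<le> lambda_max (transpose B ** M ** B)"
  by (rule psd_nonneg[OF sym_congr[OF assms(1)]]) (simp add: quadform assms(2))

lemma wlog:
  fixes G1 G2 H1 H2 :: "real^2^2"
  assumes G1: "G1 \<in> SL2_sym_pos" and G2: "G2 \<in> SL2_sym_pos" and H1: "H1 \<in> SL2_sym_pos" and H2: "H2 \<in> SL2_sym_pos"
  and le: "lambda_max G2 * lambda_max H2 \<le> lambda_max G1 * lambda_max H1"
  shows "\<exists>A B. det A = 1 \<and> det B = 1
    \<and> lambda_max (transpose B ** G1 ** B) * lambda_max (transpose A ** H1 ** A)
       \<le> sqrt (lambda_max G1 * lambda_max H1) * sqrt (lambda_max G2 * lambda_max H2)
    \<and> lambda_max (transpose B ** G2 ** B) * lambda_max (transpose A ** H2 ** A)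
       \<le> sqrt (lambda_max G1 * lambda_max H1) * sqrt (lambda_max G2 * lambda_max H2)"
proof -
  define g1 where "g1 = lambda_max G1"
  define g2 where "g2 = lambda_max G2"
  define h1 where "h1 = lambda_max H1"
  define h2 where "h2 = lambda_max H2"
  have g1g: "g1 \<ge> 1" and g2g: "g2 \<ge> 1" and h1g: "h1 \<ge> 1" and h2g: "h2 \<ge> 1"
    using spd_facts(1)[OF G1] spd_facts(1)[OF G2] spd_facts(1)[OF H1] spd_facts(1)[OF H2]
    by (simp_all add: g1_def g2_def h1_def h2_def)
  define P where "P = g1 * h1"
  define Q where "Q = g2 * h2"
  have P1: "P \<ge> 1" unfolding P_def using g1g h1g by (metis mult_mono' mult_1 zero_le_one order_trans)
  have Q1: "Q \<ge> 1" unfolding Q_def using g2g h2g by (metis mult_mono' mult_1 zero_le_one order_trans)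
  have QP: "Q \<le> P" using le unfolding P_def Q_def g1_def g2_def h1_def h2_def .
  define sP where "sP = sqrt P"
  define sQ where "sQ = sqrt Q"
  have sP1: "sP \<ge> 1" "sP^2 = P" using P1 unfolding sP_def by auto
  have sQ1: "sQ \<ge> 1" "sQ^2 = Q" using Q1 unfolding sQ_def by auto
  have sQP: "sQ \<le> sP" unfolding sP_def sQ_def using QP by simp
  define t where "t = sQ / sP"
  have tpos: "t > 0" using sP1 sQ1 unfolding t_def by simp
  have t1: "t \<le> 1" using sQP sP1 unfolding t_def by simp
  have tP: "t * P \<ge> 1"
  proof -
    have "t * P = sQ * sP" unfolding t_def sP1(2)[symmetric] using sP1(1) by (simp add: power2_eq_square)
    also have "\<dots> \<ge> 1" using sP1 sQ1 by (metis mult_mono' mult_1 zero_le_one order_trans)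
    finally show ?thesis .
  qed
  define x where "x = max t (1/g1)"
  define y where "y = t / x"
  have xpos: "x > 0" using tpos unfolding x_def by simp
  have x1: "1 / g1 \<le> x" and x2: "x \<le> 1" using t1 g1g unfolding x_def by auto
  have y2: "y \<le> 1" using xpos unfolding y_def x_def by simp
  have y1: "1 / h1 \<le> y"
  proof (cases "t \<ge> 1/g1")
    case True
    then have "y = 1" unfolding y_def x_def using tpos by simp
    then show ?thesis using h1g by simp
  next
    case False
    then have "y = t * g1" unfolding y_def x_def by simp
    moreover have "t * g1 * h1 \<ge> 1" using tP unfolding P_def by (simp add: mult.assoc)
    ultimately show ?thesis using h1g by (simp add: field_simps)
  qed
  have xy: "x * y = t" unfolding y_def using xpos by simp
  obtain B where B: "det B = 1" "lambda_max (transpose B ** G1 ** B) \<le> g1 * x"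
    "\<And>M. transpose M = M \<Longrightarrow> (\<forall>v. 0 \<le> v \<bullet> (M *v v)) \<Longrightarrow> lambda_max (transpose B ** M ** B) \<le> lambda_max M / x"
    using scale[OF G1, of x] x1 x2 unfolding g1_def by blast
  obtain A where A: "det A = 1" "lambda_max (transpose A ** H1 ** A) \<le> h1 * y"
    "\<And>M. transpose M = M \<Longrightarrow> (\<forall>v. 0 \<le> v \<bullet> (M *v v)) \<Longrightarrow> lambda_max (transpose A ** M ** A) \<le> lambda_max M / y"
    using scale[OF H1, of y] y1 y2 unfolding h1_def by blast
  have KK: "sqrt (lambda_max G1 * lambda_max H1) * sqrt (lambda_max G2 * lambda_max H2) = sP * sQ"
    unfolding sP_def sQ_def P_def Q_def g1_def g2_def h1_def h2_def ..
  have n1: "0 \<le> lambda_max (transpose B ** G1 ** B)" by (rule nonneg_congr) (use spd_facts[OF G1] in auto)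
  have n2: "0 \<le> lambda_max (transpose A ** H1 ** A)" by (rule nonneg_congr) (use spd_facts[OF H1] in auto)
  have n3: "0 \<le> lambda_max (transpose B ** G2 ** B)" by (rule nonneg_congr) (use spd_facts[OF G2] in auto)
  have n4: "0 \<le> lambda_max (transpose A ** H2 ** A)" by (rule nonneg_congr) (use spd_facts[OF H2] in auto)
  have b3: "lambda_max (transpose B ** G2 ** B) \<le> g2 / x"
    using B(3)[of G2] spd_facts[OF G2] unfolding g2_def by auto
  have b4: "lambda_max (transpose A ** H2 ** A) \<le> h2 / y"
    using A(3)[of H2] spd_facts[OF H2] unfolding h2_def by auto
  have "lambda_max (transpose B ** G1 ** B) * lambda_max (transpose A ** H1 ** A) \<le> (g1 * x) * (h1 * y)"
    by (rule mult_mono[OF B(2) A(2)]) (use n1 n2 g1g xpos in auto)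
  also have "\<dots> = P * t" unfolding P_def xy[symmetric] by (simp add: algebra_simps)
  also have "\<dots> = sP * sQ" unfolding t_def sP1(2)[symmetric] using sP1(1) by (simp add: power2_eq_square)
  finally have T1: "lambda_max (transpose B ** G1 ** B) * lambda_max (transpose A ** H1 ** A) \<le> sP * sQ" .
  have ypos: "y > 0" using tpos xpos unfolding y_def by simp
  have "lambda_max (transpose B ** G2 ** B) * lambda_max (transpose A ** H2 ** A) \<le> (g2 / x) * (h2 / y)"
    by (rule mult_mono[OF b3 b4]) (use n3 n4 g2g xpos in auto)
  also have "\<dots> = Q / t" unfolding Q_def xy[symmetric] by simp
  also have "\<dots> = sP * sQ" unfolding t_def sQ1(2)[symmetric] using sQ1(1) sP1(1) by (simp add: power2_eq_square)
  finally have T2: "lambda_max (transpose B ** G2 ** B) * lambda_max (transpose A ** H2 ** A) \<le> sP * sQ" .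
  show ?thesis unfolding KK using A(1) B(1) T1 T2 by blast
qed


theorem mainTheorem6:
  fixes G1 G2 H1 H2 :: "real^2^2"
  assumes "G1 \<in> SL2_sym_pos" "G2 \<in> SL2_sym_pos" "H1 \<in> SL2_sym_pos" "H2 \<in> SL2_sym_pos"
  defines "g1 \<equiv> lambda_max G1" and "g2 \<equiv> lambda_max G2"
      and "h1 \<equiv> lambda_max H1" and "h2 \<equiv> lambda_max H2"
  shows "Kmin G1 G2 H1 H2 \<le> sqrt (g1 * h1 * g2 * h2)
         \<and> sqrt (g1 * h1 * g2 * h2) \<le> max (g1 * h1) (g2 * h2)
         \<and> (g1 * h1 \<noteq> g2 * h2 \<longrightarrow> Kmin G1 G2 H1 H2 < max (g1 * h1) (g2 * h2))"
proof -
  define f where "f = (\<lambda>AB::(real^2^2) \<times> (real^2^2). (let A = fst AB; B = snd AB in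
      max (lambda_max (transpose B ** G1 ** B) * lambda_max (transpose A ** H1 ** A))
          (lambda_max (transpose B ** G2 ** B) * lambda_max (transpose A ** H2 ** A))))"
  have Kd: "Kmin G1 G2 H1 H2 = (INF AB \<in> SL2 \<times> SL2. f AB)" unfolding Kmin_def f_def ..
  have fnn: "0 \<le> f AB" for AB
  proof -
    have "0 \<le> lambda_max (transpose (snd AB) ** G1 ** snd AB)" by (rule nonneg_congr) (use spd_facts[OF assms(1)] in auto)
    moreover have "0 \<le> lambda_max (transpose (fst AB) ** H1 ** fst AB)" by (rule nonneg_congr) (use spd_facts[OF assms(3)] in auto)
    ultimately show ?thesis unfolding f_def Let_def by (simp add: le_max_iff_disj)
  qed
  have bdd: "bdd_below (f ` (SL2 \<times> SL2))" by (rule bdd_belowI[of _ 0]) (use fnn in auto)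
  define P where "P = g1 * h1"
  define Q where "Q = g2 * h2"
  have g1g: "g1 \<ge> 1" and g2g: "g2 \<ge> 1" and h1g: "h1 \<ge> 1" and h2g: "h2 \<ge> 1"
    using spd_facts(1)[OF assms(1)] spd_facts(1)[OF assms(2)] spd_facts(1)[OF assms(3)] spd_facts(1)[OF assms(4)]
    by (simp_all add: g1_def g2_def h1_def h2_def)
  have P1: "P \<ge> 1" unfolding P_def using g1g h1g by (metis mult_mono' mult_1 zero_le_one order_trans)
  have Q1: "Q \<ge> 1" unfolding Q_def using g2g h2g by (metis mult_mono' mult_1 zero_le_one order_trans)
  have Kh: "sqrt (g1 * h1 * g2 * h2) = sqrt P * sqrt Q"
    unfolding P_def Q_def by (simp add: real_sqrt_mult[symmetric] mult.assoc)
  have c1: "Kmin G1 G2 H1 H2 \<le> sqrt P * sqrt Q"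
  proof (cases "Q \<le> P")
    case True
    then obtain A B where AB: "det A = 1" "det B = 1"
      "lambda_max (transpose B ** G1 ** B) * lambda_max (transpose A ** H1 ** A) \<le> sqrt P * sqrt Q"
      "lambda_max (transpose B ** G2 ** B) * lambda_max (transpose A ** H2 ** A) \<le> sqrt P * sqrt Q"
      using wlog[OF assms(1-4)] unfolding P_def Q_def g1_def g2_def h1_def h2_def by blast
    have "f (A, B) \<le> sqrt P * sqrt Q" unfolding f_def Let_def using AB by simp
    moreover have "(A, B) \<in> SL2 \<times> SL2" using AB by (simp add: SL2_def)
    ultimately show ?thesis unfolding Kd by (intro cINF_lower2[OF bdd]) auto
  next
    case False
    then obtain A B where AB: "det A = 1" "det B = 1"
      "lambda_max (transpose B ** G2 ** B) * lambda_max (transpose A ** H2 ** A) \<le> sqrt Q * sqrt P"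
      "lambda_max (transpose B ** G1 ** B) * lambda_max (transpose A ** H1 ** A) \<le> sqrt Q * sqrt P"
      using wlog[OF assms(2) assms(1) assms(4) assms(3)] unfolding P_def Q_def g1_def g2_def h1_def h2_def by fastforce
    have "f (A, B) \<le> sqrt P * sqrt Q" unfolding f_def Let_def using AB by (simp add: mult.commute)
    moreover have "(A, B) \<in> SL2 \<times> SL2" using AB by (simp add: SL2_def)
    ultimately show ?thesis unfolding Kd by (intro cINF_lower2[OF bdd]) auto
  qed
  have c2: "sqrt P * sqrt Q \<le> max P Q"
  proof -
    have "sqrt P \<le> sqrt (max P Q)" "sqrt Q \<le> sqrt (max P Q)" by auto
    then have "sqrt P * sqrt Q \<le> sqrt (max P Q) * sqrt (max P Q)" by (rule mult_mono) (use P1 Q1 in auto)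
    also have "\<dots> = max P Q" using P1 by (simp add: abs_of_nonneg le_max_iff_disj)
    finally show ?thesis .
  qed
  have c3: "sqrt P * sqrt Q < max P Q" if ne: "P \<noteq> Q"
  proof (cases "P < Q")
    case True
    have "sqrt P * sqrt Q < sqrt Q * sqrt Q" by (rule mult_strict_right_mono) (use True Q1 in auto)
    moreover have "sqrt Q * sqrt Q = Q" using Q1 by simp
    ultimately show ?thesis using True by (simp add: max_def)
  next
    case False
    then have QP: "Q < P" using ne by simp
    have "sqrt P * sqrt Q < sqrt P * sqrt P" by (rule mult_strict_left_mono) (use QP Q1 in auto)
    moreover have "sqrt P * sqrt P = P" using P1 by simp
    ultimately show ?thesis using QP by (simp add: max_def)
  qed
  have e1: "g1 * h1 = P" "g2 * h2 = Q" unfolding P_def Q_def by simp_all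
  show ?thesis unfolding Kh unfolding e1
    using c1 c2 c3 by auto
qed

end
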